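(* Let $N\ge 2$, $p\ge 1$ and $f\in L^p(\mathbb T^N)$. For a.e. $(t_2,\dots,t_N)\in\mathbb T^{N-1}$ let $f_{t_2,\dots,t_N}(t)=f(t,t_2,\dots,t_N)$, and let $\hat f(t_2,\dots,t_N)=\int_{\mathbb T} f(t,t_2,\dots,t_N)\,d\mu_1(t)$. Then $f\in \mathbf H^p(\mathbb T^N)$ if and only if $f_{t_2,\dots,t_N}\in \mathbf H^p(\mathbb T)$ for a.e. $(t_2,\dots,t_N)\in\mathbb T^{N-1}$ and $\hat f\in \mathbf H^p(\mathbb T^{N-1})$.
   Context: $\mathbb T$ is the unit circle, $\mu_N$ the normalized Lebesgue measure $d\mathbf t/(2\pi)^N$ on $\mathbb T^N$. The half-plane of lattice points $H_N\subset\mathbb Z^N$ is defined recursively by $H_1=\{0,1,2,\dots\}$ and $H_N=\{(k_1,\dots,k_N)\in\mathbb Z^N: k_1>0, \text{ or } k_1=0 \text{ and } (k_2,\dots,k_N)\in H_{N-1}\}$. For $f\in L^1(\mathbb T^N)$ the Fourier coefficients are $C_{\mathbf k}\{f\}=\int_{\mathbb T^N} f(\mathbf t)\mathbf t^{-\mathbf k}\,d\mu_N$, where $\mathbf t^{\mathbf k}=t_1^{k_1}\cdots t_N^{k_N}$. $\mathcal A(\mathbb T^N)$ is the set of $f\in L^1(\mathbb T^N)$ with $C_{\mathbf k}\{f\}=0$ for all $\mathbf k\notin H_N$, and for $p\ge1$, $\mathbf H^p(\mathbb T^N):=\mathcal A(\mathbb T^N)\cap L^p(\mathbb T^N)$ (for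 $N=1$ this is the classical Hardy space of boundary functions). *)

theory Defs
  imports "HOL-Analysis.Analysis"
begin

text \<open>The circle T is parametrised by the angle theta in [0,2pi), t = exp(i theta);
  mu_1 is the normalized Lebesgue measure on [0,2pi).  Points of T^N are
  angle vectors x :: nat => real with coordinates x 0, ..., x (N-1)
  (coordinate j corresponds to t_(j+1) of the paper).\<close>

definition circle_measure :: "real measure" where
  "circle_measure = uniform_measure lborel {0..<2*pi}"

definition torus :: "nat \<Rightarrow> (nat \<Rightarrow> real) measure" where
  "torus N = PiM {..<N} (\<lambda>_. circle_measure)"

definition fourier_coeff :: "nat \<Rightarrow> (nat \<Rightarrow> int) \<Rightarrow> ((nat \<Rightarrow> real) \<Rightarrow> complex) \<Rightarrow> complex" where
  "fourier_coeff N k f = (\<integral>x. f x * exp (- \<i> * of_real (\<Sum>j<N. of_int (k j) * x j)) \<partial>torus N)"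

text \<open>Half-plane H_N of lattice points (only k 0, ..., k (N-1) matter).
  H_0 = everything is an auxiliary base case, making H_1 = {k 0 >= 0}.\<close>
fun in_halfplane :: "nat \<Rightarrow> (nat \<Rightarrow> int) \<Rightarrow> bool" where
  "in_halfplane 0 k = True"
| "in_halfplane (Suc n) k = (k 0 > 0 \<or> (k 0 = 0 \<and> in_halfplane n (\<lambda>i. k (Suc i))))"

definition Lp_space :: "'a measure \<Rightarrow> real \<Rightarrow> ('a \<Rightarrow> complex) \<Rightarrow> bool" where
  "Lp_space M p f \<longleftrightarrow> f \<in> borel_measurable M \<and> integrable M (\<lambda>x. norm (f x) powr p)"

definition analytic_class :: "nat \<Rightarrow> ((nat \<Rightarrow> real) \<Rightarrow> complex) \<Rightarrow> bool" where
  "analytic_class N f \<longleftrightarrow> integrable (torus N) f \<and>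
     (\<forall>k. \<not> in_halfplane N k \<longrightarrow> fourier_coeff N k f = 0)"

definition Hp :: "nat \<Rightarrow> real \<Rightarrow> ((nat \<Rightarrow> real) \<Rightarrow> complex) \<Rightarrow> bool" where
  "Hp N p f \<longleftrightarrow> analytic_class N f \<and> Lp_space (torus N) p f"

definition tcons :: "nat \<Rightarrow> real \<Rightarrow> (nat \<Rightarrow> real) \<Rightarrow> (nat \<Rightarrow> real)" where
  "tcons N t s = (\<lambda>i. if i = 0 then t else if i < N then s (i - 1) else undefined)"

definition slice :: "nat \<Rightarrow> ((nat \<Rightarrow> real) \<Rightarrow> complex) \<Rightarrow> (nat \<Rightarrow> real) \<Rightarrow> ((nat \<Rightarrow> real) \<Rightarrow> complex)" where
  "slice N f s = (\<lambda>x. f (tcons N (x 0) s))"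

definition fhat :: "nat \<Rightarrow> ((nat \<Rightarrow> real) \<Rightarrow> complex) \<Rightarrow> ((nat \<Rightarrow> real) \<Rightarrow> complex)" where
  "fhat N f = (\<lambda>s. \<integral>t. f (tcons N t s) \<partial>circle_measure)"

end

theory Submission
  imports Defs "HOL-Probability.Probability"
begin
lemma circle_prob: "prob_space circle_measure"
  unfolding circle_measure_def
  by (rule prob_space_uniform_measure) (auto simp: ennreal_mult_eq_top_iff)

lemma sets_circle[measurable_cong, simp]: "sets circle_measure = sets borel"
  unfolding circle_measure_def by simp

lemma space_circle[simp]: "space circle_measure = UNIV"
  unfolding circle_measure_def by simp

lemma torus_prob: "prob_space (torus n)"
  unfolding torus_def by (intro prob_space_PiM circle_prob)

lemma circle_psf: "product_sigma_finite (\<lambda>_. circle_measure)"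
proof -
  interpret prob_space circle_measure by (rule circle_prob)
  show ?thesis by unfold_locales
qed

lemma space_torus: "space (torus n) = PiE {..<n} (\<lambda>_. UNIV)"
  unfolding torus_def by (simp add: space_PiM)

lemma AE_circle: "AE x in circle_measure. 0 \<le> x \<and> x < 2*pi \<and> x \<noteq> 0"
  unfolding circle_measure_def
  by (rule AE_uniform_measureI) (auto intro: AE_lborel_singleton[THEN AE_mp])

lemma integrable_mult_bdd:
  fixes h g :: "'a \<Rightarrow> complex"
  assumes "integrable M h" "g \<in> borel_measurable M" "\<And>x. norm (g x) \<le> B"
  shows "integrable M (\<lambda>x. h x * g x)"
proof (rule Bochner_Integration.integrable_bound[where f="\<lambda>x. of_real B * h x"])
  show "integrable M (\<lambda>x. of_real B * h x)" using assms(1) by simp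
  show "(\<lambda>x. h x * g x) \<in> borel_measurable M" using assms by (auto intro: borel_measurable_integrable)
  show "AE x in M. norm (h x * g x) \<le> norm (of_real B * h x)"
  proof (intro AE_I2)
    fix x
    have "norm (h x * g x) = norm (h x) * norm (g x)" by (simp add: norm_mult)
    also have "\<dots> \<le> norm (h x) * B" by (intro mult_left_mono assms(3)) auto
    also have "\<dots> \<le> norm (h x) * abs B" by (intro mult_left_mono) auto
    also have "\<dots> = norm (of_real B * h x)" by (simp add: norm_mult mult.commute)
    finally show "norm (h x * g x) \<le> norm (of_real B * h x)" .
  qed
qed

definition tp :: "(complex \<times> int) list \<Rightarrow> real \<Rightarrow> complex" where
  "tp xs x = (\<Sum>(c,k)\<leftarrow>xs. c * exp (\<i> * of_real (of_int k * x)))"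

lemma tp_Nil[simp]: "tp [] x = 0" by (simp add: tp_def)
lemma tp_Cons[simp]: "tp ((c,k)#xs) x = c * exp (\<i> * of_real (of_int k * x)) + tp xs x"
  by (simp add: tp_def)
lemma tp_append[simp]: "tp (xs @ ys) x = tp xs x + tp ys x" by (simp add: tp_def)

lemma tp_scale: "c * exp (\<i> * of_real (of_int k * x)) * tp ys x = tp (map (\<lambda>(d,l). (c*d, k+l)) ys) x"
proof (induction ys)
  case (Cons y ys) then show ?case
    by (cases y) (simp add: distrib_left distrib_right exp_add[symmetric] algebra_simps)
qed simp

lemma tp_mult: "tp xs x * tp ys x = tp (concat (map (\<lambda>(c,k). map (\<lambda>(d,l). (c*d, k+l)) ys) xs)) x"
proof (induction xs)
  case (Cons a xs) then show ?case
    by (cases a) (simp add: tp_scale[symmetric] distrib_right)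
qed simp

lemma tp_measurable[measurable]: "tp xs \<in> borel_measurable borel"
  unfolding tp_def by (induction xs) auto

lemma tp_bounded: "\<exists>B. \<forall>x. norm (tp xs x) \<le> B"
proof (induction xs)
  case Nil then show ?case by auto
next
  case (Cons a xs)
  then obtain B where B: "\<forall>x. norm (tp xs x) \<le> B" by auto
  obtain c k where a: "a = (c,k)" by (cases a)
  have "norm (tp (a#xs) x) \<le> norm c + B" for x
  proof -
    have "norm (tp (a#xs) x) \<le> norm (c * exp (\<i> * of_real (of_int k * x))) + norm (tp xs x)"
      unfolding a tp_Cons by (rule norm_triangle_ineq)
    also have "norm (c * exp (\<i> * of_real (of_int k * x))) = norm c"
      by (simp add: norm_mult)
    finally show ?thesis using B[rule_format, of x] by linarith
  qed
  then show ?case by blast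
qed

lemma tp_integral_zero:
  assumes h: "integrable circle_measure h"
    and H: "\<And>m::int. (\<integral>t. h t * exp (- \<i> * of_real (of_int m * t)) \<partial>circle_measure) = 0"
  shows "(\<integral>t. h t * tp xs t \<partial>circle_measure) = 0"
proof (induction xs)
  case Nil then show ?case by simp
next
  case (Cons a xs)
  obtain c k where a: "a = (c,k)" by (cases a)
  have i1: "integrable circle_measure (\<lambda>t. h t * exp (\<i> * of_real (of_int k * t)))"
    by (rule integrable_mult_bdd[OF h, where B=1]) (auto simp: norm_mult)
  have i2: "integrable circle_measure (\<lambda>t. h t * tp xs t)"
    using tp_bounded[of xs] h by (auto intro: integrable_mult_bdd)
  have e: "(\<integral>t. h t * exp (\<i> * of_real (of_int k * t)) \<partial>circle_measure) = 0"
    using H[of "-k"] by simp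
  have "(\<integral>t. h t * tp (a#xs) t \<partial>circle_measure) =
     (\<integral>t. c * (h t * exp (\<i> * of_real (of_int k * t))) + h t * tp xs t \<partial>circle_measure)"
    unfolding a by (rule Bochner_Integration.integral_cong) (auto simp: algebra_simps)
  also have "\<dots> = c * (\<integral>t. h t * exp (\<i> * of_real (of_int k * t)) \<partial>circle_measure) + (\<integral>t. h t * tp xs t \<partial>circle_measure)"
    using i1 i2 by simp
  finally show ?case using e Cons by simp
qed

lemma rpf_tp:
  fixes g :: "complex \<Rightarrow> real"
  assumes "real_polynomial_function g"
  shows "\<exists>xs. \<forall>x. complex_of_real (g (exp (\<i> * of_real x))) = tp xs x"
  using assms
proof (induction rule: real_polynomial_function.induct)
  case (linear g)
  then have lin: "linear g" by (rule bounded_linear.linear)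
  have gz: "g z = Re z * g 1 + Im z * g \<i>" for z
  proof -
    have "z = Re z *\<^sub>R 1 + Im z *\<^sub>R \<i>" by (simp add: complex_eq_iff)
    then have "g z = g (Re z *\<^sub>R 1 + Im z *\<^sub>R \<i>)" by simp
    also have "\<dots> = Re z * g 1 + Im z * g \<i>"
      using lin by (simp add: linear_add linear_scale)
    finally show ?thesis .
  qed
  define a where "a = g 1"
  define b where "b = g \<i>"
  have "complex_of_real (g (exp (\<i> * of_real x))) =
      tp [((of_real a - \<i> * of_real b)/2, 1), ((of_real a + \<i> * of_real b)/2, -1)] x" for x
  proof -
    have c: "complex_of_real (cos x) = (exp (\<i> * of_real x) + exp (-(\<i> * of_real x))) / 2"
      using cos_exp_eq[of "of_real x"] by (simp add: cos_of_real)
    have s: "complex_of_real (sin x) = \<i> * (exp (-(\<i> * of_real x)) - exp (\<i> * of_real x)) / 2"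
      using sin_exp_eq'[of "of_real x"] by (simp add: sin_of_real)
    have "complex_of_real (g (exp (\<i> * of_real x))) = complex_of_real (cos x) * of_real a + complex_of_real (sin x) * of_real b"
      unfolding gz[of "exp (\<i> * of_real x)"] a_def[symmetric] b_def[symmetric] by (simp add: Re_exp Im_exp)
    also have "\<dots> = (exp (\<i> * of_real x) + exp (-(\<i> * of_real x))) / 2 * of_real a +
        \<i> * (exp (-(\<i> * of_real x)) - exp (\<i> * of_real x)) / 2 * of_real b"
      unfolding c s ..
    also have "\<dots> = (of_real a - \<i> * of_real b)/2 * exp (\<i> * of_real x) + (of_real a + \<i> * of_real b)/2 * exp (-(\<i> * of_real x))"
      by (simp add: ring_distribs diff_divide_distrib add_divide_distrib algebra_simps)
    also have "\<dots> = tp [((of_real a - \<i> * of_real b)/2, 1), ((of_real a + \<i> * of_real b)/2, -1)] x"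
      by simp
    finally show ?thesis .
  qed
  then show ?case by blast
next
  case (const c)
  have "complex_of_real c = tp [(of_real c, 0)] x" for x by simp
  then show ?case by blast
next
  case (add f g)
  then obtain xs ys where "\<forall>x. complex_of_real (f (exp (\<i> * of_real x))) = tp xs x"
    "\<forall>x. complex_of_real (g (exp (\<i> * of_real x))) = tp ys x" by blast
  then have "\<forall>x. complex_of_real (f (exp (\<i> * of_real x)) + g (exp (\<i> * of_real x))) = tp (xs @ ys) x"
    by simp
  then show ?case by blast
next
  case (mult f g)
  then obtain xs ys where "\<forall>x. complex_of_real (f (exp (\<i> * of_real x))) = tp xs x"
    "\<forall>x. complex_of_real (g (exp (\<i> * of_real x))) = tp ys x" by blast
  then have "\<forall>x. complex_of_real (f (exp (\<i> * of_real x)) * g (exp (\<i> * of_real x))) =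
     tp (concat (map (\<lambda>(c,k). map (\<lambda>(d,l). (c*d, k+l)) ys) xs)) x"
    by (simp add: tp_mult[symmetric])
  then show ?case by blast
qed

lemma cont_integral_zero:
  fixes \<psi> :: "complex \<Rightarrow> real"
  assumes h: "integrable circle_measure h"
    and H: "\<And>m::int. (\<integral>t. h t * exp (- \<i> * of_real (of_int m * t)) \<partial>circle_measure) = 0"
    and cont: "continuous_on UNIV \<psi>"
  shows "(\<integral>t. h t * of_real (\<psi> (exp (\<i> * of_real t))) \<partial>circle_measure) = 0"
proof -
  define S :: "complex set" where "S = sphere 0 1"
  have cS: "compact S" unfolding S_def by simp
  have eS: "exp (\<i> * of_real t) \<in> S" for t unfolding S_def by simp
  have mpsi[measurable]: "\<psi> \<in> borel_measurable borel" using cont by (rule borel_measurable_continuous_onI)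
  have "compact (\<psi> ` S)" using cS cont by (auto intro: compact_continuous_image continuous_on_subset)
  then obtain B where B: "\<forall>y\<in>\<psi> ` S. norm y \<le> B" using compact_imp_bounded bounded_iff by metis
  have intpsi: "integrable circle_measure (\<lambda>t. h t * of_real (\<psi> (exp (\<i> * of_real t))))"
    by (rule integrable_mult_bdd[OF h, where B=B]) (use B eS in auto)
  define I where "I = (\<integral>t. h t * of_real (\<psi> (exp (\<i> * of_real t))) \<partial>circle_measure)"
  define C where "C = (\<integral>t. norm (h t) \<partial>circle_measure)"
  have C0: "C \<ge> 0" unfolding C_def by simp
  have bound: "norm I \<le> e * C" if e: "e > 0" for e
  proof -
    obtain g :: "complex \<Rightarrow> real" where g: "polynomial_function g" "\<forall>x\<in>S. norm (\<psi> x - g x) < e"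
      using Stone_Weierstrass_polynomial_function[OF cS continuous_on_subset[OF cont] e] by auto
    have rg: "real_polynomial_function g" using g(1) by (simp add: real_polynomial_function_eq)
    obtain xs where xs: "\<And>x. complex_of_real (g (exp (\<i> * of_real x))) = tp xs x"
      using rpf_tp[OF rg] by blast
    obtain B' where B': "\<forall>x. norm (tp xs x) \<le> B'" using tp_bounded by blast
    have inttp: "integrable circle_measure (\<lambda>t. h t * tp xs t)"
      by (rule integrable_mult_bdd[OF h, where B=B']) (use B' in auto)
    have z: "(\<integral>t. h t * tp xs t \<partial>circle_measure) = 0" by (rule tp_integral_zero[OF h H])
    have "I = I - (\<integral>t. h t * tp xs t \<partial>circle_measure)" using z by simp
    also have "\<dots> = (\<integral>t. h t * of_real (\<psi> (exp (\<i> * of_real t))) - h t * tp xs t \<partial>circle_measure)"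
      unfolding I_def using intpsi inttp by simp
    also have "\<dots> = (\<integral>t. h t * of_real (\<psi> (exp (\<i> * of_real t)) - g (exp (\<i> * of_real t))) \<partial>circle_measure)"
      by (rule Bochner_Integration.integral_cong) (auto simp: xs[symmetric] algebra_simps)
    finally have Ieq: "I = \<dots>" .
    have intd: "integrable circle_measure (\<lambda>t. h t * of_real (\<psi> (exp (\<i> * of_real t)) - g (exp (\<i> * of_real t))))"
    proof -
      have "integrable circle_measure (\<lambda>t. h t * of_real (\<psi> (exp (\<i> * of_real t))) - h t * tp xs t)"
        using intpsi inttp by simp
      moreover have "(\<lambda>t. h t * of_real (\<psi> (exp (\<i> * of_real t)) - g (exp (\<i> * of_real t)))) =
         (\<lambda>t. h t * of_real (\<psi> (exp (\<i> * of_real t))) - h t * tp xs t)"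
        by (rule ext) (auto simp: xs[symmetric] algebra_simps)
      ultimately show ?thesis by simp
    qed
    have "norm I \<le> (\<integral>t. norm (h t * of_real (\<psi> (exp (\<i> * of_real t)) - g (exp (\<i> * of_real t)))) \<partial>circle_measure)"
      unfolding Ieq by (rule integral_norm_bound)
    also have "\<dots> \<le> (\<integral>t. norm (h t) * e \<partial>circle_measure)"
    proof (rule integral_mono)
      show "integrable circle_measure (\<lambda>t. norm (h t * of_real (\<psi> (exp (\<i> * of_real t)) - g (exp (\<i> * of_real t)))))"
        using intd by (rule integrable_norm)
      show "integrable circle_measure (\<lambda>t. norm (h t) * e)" using h by simp
      fix t
      have "norm (\<psi> (exp (\<i> * of_real t)) - g (exp (\<i> * of_real t))) \<le> e"
        using g(2) eS[of t] by (simp add: less_imp_le)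
      then show "norm (h t * of_real (\<psi> (exp (\<i> * of_real t)) - g (exp (\<i> * of_real t)))) \<le> norm (h t) * e"
        by (simp add: norm_mult mult_left_mono of_real_diff[symmetric] del: of_real_diff)
    qed
    also have "\<dots> = e * C" unfolding C_def by simp
    finally show ?thesis .
  qed
  have "norm I \<le> 0"
  proof (rule ccontr)
    assume "\<not> norm I \<le> 0"
    then have pos: "norm I > 0" by simp
    define e where "e = norm I / (2 * (C + 1))"
    have e0: "e > 0" unfolding e_def using pos C0 by simp
    have "norm I \<le> e * C" by (rule bound[OF e0])
    also have "e * C < norm I"
    proof -
      have "e * C = norm I * (C / (2 * (C+1)))" unfolding e_def by (simp add: field_simps)
      also have "\<dots> < norm I * 1" using pos C0 by (intro mult_strict_left_mono) (auto simp: field_simps)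
      finally show ?thesis by simp
    qed
    finally show False by simp
  qed
  then show ?thesis unfolding I_def by simp
qed

lemma open_integral_zero:
  assumes h: "integrable circle_measure h"
    and H: "\<And>m::int. (\<integral>t. h t * exp (- \<i> * of_real (of_int m * t)) \<partial>circle_measure) = 0"
    and V: "open V"
  shows "(\<integral>t. h t * of_real (indicator V (exp (\<i> * of_real t))) \<partial>circle_measure) = 0"
proof (cases "V = UNIV")
  case True
  then show ?thesis using H[of 0] by simp
next
  case False
  define A where "A = - V"
  have A: "closed A" "A \<noteq> {}" unfolding A_def using V False by auto
  define \<psi> :: "nat \<Rightarrow> complex \<Rightarrow> real" where "\<psi> m z = min 1 (real m * infdist z A)" for m z
  have contpsi: "continuous_on UNIV (\<psi> m)" for m
    unfolding \<psi>_def by (intro continuous_intros)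
  have mpsi[measurable]: "\<psi> m \<in> borel_measurable borel" for m
    by (rule borel_measurable_continuous_onI[OF contpsi])
  have Vb[measurable]: "V \<in> sets borel" using V by simp
  have z: "(\<integral>t. h t * of_real (\<psi> m (exp (\<i> * of_real t))) \<partial>circle_measure) = 0" for m
    by (rule cont_integral_zero[OF h H contpsi])
  have lim: "(\<lambda>m. \<psi> m z) \<longlonglongrightarrow> indicator V z" for z
  proof (cases "z \<in> V")
    case True
    then have "z \<notin> A" unfolding A_def by simp
    then have d: "infdist z A > 0" using infdist_pos_not_in_closed A by blast
    obtain M :: nat where M: "real M > 1 / infdist z A" using reals_Archimedean2 by blast
    have "eventually (\<lambda>m. \<psi> m z = 1) sequentially"
      unfolding eventually_sequentially
    proof (intro exI allI impI)
      fix m assume "M \<le> m"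
      then have "real m > 1 / infdist z A" using M by (meson le_less_trans less_le_trans of_nat_mono not_less)
      then have "real m * infdist z A > 1" using d by (simp add: field_simps)
      then show "\<psi> m z = 1" unfolding \<psi>_def by simp
    qed
    then have "(\<lambda>m. \<psi> m z) \<longlonglongrightarrow> 1" by (rule tendsto_eventually)
    then show ?thesis using True by simp
  next
    case False
    then have "z \<in> A" unfolding A_def by simp
    then have "\<psi> m z = 0" for m unfolding \<psi>_def by simp
    then show ?thesis using False by simp
  qed
  have "(\<lambda>m. \<integral>t. h t * of_real (\<psi> m (exp (\<i> * of_real t))) \<partial>circle_measure) \<longlonglongrightarrow>
      (\<integral>t. h t * of_real (indicator V (exp (\<i> * of_real t))) \<partial>circle_measure)"
  proof (rule integral_dominated_convergence[where w="\<lambda>t. norm (h t)"])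
    show "(\<lambda>t. h t * of_real (indicator V (exp (\<i> * of_real t)))) \<in> borel_measurable circle_measure"
      using h by measurable
    show "(\<lambda>t. h t * of_real (\<psi> m (exp (\<i> * of_real t)))) \<in> borel_measurable circle_measure" for m
      using h by measurable
    show "integrable circle_measure (\<lambda>t. norm (h t))" using h by simp
    show "AE t in circle_measure. (\<lambda>m. h t * of_real (\<psi> m (exp (\<i> * of_real t)))) \<longlonglongrightarrow>
        h t * of_real (indicator V (exp (\<i> * of_real t)))"
      by (intro AE_I2 tendsto_mult tendsto_const tendsto_of_real lim)
    show "AE t in circle_measure. norm (h t * of_real (\<psi> m (exp (\<i> * of_real t)))) \<le> norm (h t)" for m
    proof (intro AE_I2)
      fix t
      have "\<bar>\<psi> m (exp (\<i> * of_real t))\<bar> \<le> 1"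
        unfolding \<psi>_def by (simp add: infdist_nonneg)
      then show "norm (h t * of_real (\<psi> m (exp (\<i> * of_real t)))) \<le> norm (h t)"
        by (simp add: norm_mult mult_left_le)
    qed
  qed
  then show ?thesis using z by (simp add: LIMSEQ_const_iff)
qed

lemma exp_nonneg_iff: 
  assumes "0 < t" "t < 2*pi"
  shows "exp (\<i> * complex_of_real t) \<notin> \<real>\<^sub>\<ge>\<^sub>0" and "Arg2pi (exp (\<i> * complex_of_real t)) = t"
proof -
  show A: "Arg2pi (exp (\<i> * complex_of_real t)) = t"
    using assms by (subst Arg2pi_exp) auto
  show "exp (\<i> * complex_of_real t) \<notin> \<real>\<^sub>\<ge>\<^sub>0"
  proof
    assume "exp (\<i> * complex_of_real t) \<in> \<real>\<^sub>\<ge>\<^sub>0"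
    then have "Arg2pi (exp (\<i> * complex_of_real t)) = 0"
      by (subst Arg2pi_eq_0) (auto simp: complex_nonneg_Reals_iff complex_is_Real_iff)
    then show False using A assms by simp
  qed
qed

lemma box_integral_zero:
  assumes h: "integrable circle_measure h"
    and H: "\<And>m::int. (\<integral>t. h t * exp (- \<i> * of_real (of_int m * t)) \<partial>circle_measure) = 0"
  shows "(\<integral>t. h t * of_real (indicator {a<..<b} t) \<partial>circle_measure) = 0"
proof -
  define a' where "a' = max a 0"
  define b' where "b' = min b (2*pi)"
  show ?thesis
  proof (cases "a' < b'")
    case False
    have "AE t in circle_measure. h t * of_real (indicator {a<..<b} t) = 0"
      using AE_circle by eventually_elim (use False in \<open>auto simp: a'_def b'_def indicator_def\<close>)
    then have "(\<integral>t. h t * of_real (indicator {a<..<b} t) \<partial>circle_measure) = (\<integral>t. 0 \<partial>circle_measure)"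
      by (intro integral_cong_AE) (use h in auto)
    then show ?thesis by simp
  next
    case True
    define V where "V = (- \<real>\<^sub>\<ge>\<^sub>0) \<inter> Arg2pi -` {a'<..<b'}"
    have cont: "continuous_on (- \<real>\<^sub>\<ge>\<^sub>0) Arg2pi"
      by (intro continuous_at_imp_continuous_on ballI continuous_at_Arg2pi) auto
    have oV: "open V" unfolding V_def
      by (rule continuous_open_preimage[OF cont]) auto
    have "AE t in circle_measure. h t * of_real (indicator {a<..<b} t) = h t * of_real (indicator V (exp (\<i> * of_real t)))"
      using AE_circle
    proof eventually_elim
      case (elim t)
      then have t: "0 < t" "t < 2*pi" by auto
      have "t \<in> {a<..<b} \<longleftrightarrow> exp (\<i> * of_real t) \<in> V"
        using exp_nonneg_iff[OF t] t unfolding V_def a'_def b'_def by auto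
      then show ?case by (simp add: indicator_def)
    qed
    then have "(\<integral>t. h t * of_real (indicator {a<..<b} t) \<partial>circle_measure) =
        (\<integral>t. h t * of_real (indicator V (exp (\<i> * of_real t))) \<partial>circle_measure)"
    proof (intro integral_cong_AE)
      have [measurable]: "V \<in> sets borel" using oV by simp
      show "(\<lambda>t. h t * of_real (indicator V (exp (\<i> * of_real t)))) \<in> borel_measurable circle_measure"
        using h by measurable
    qed (use h in auto)
    also have "\<dots> = 0" by (rule open_integral_zero[OF h H oV])
    finally show ?thesis .
  qed
qed

lemma unique1:
  assumes h: "integrable circle_measure h"
    and H: "\<And>m::int. (\<integral>t. h t * exp (- \<i> * of_real (of_int m * t)) \<partial>circle_measure) = 0"
  shows "AE t in circle_measure. h t = 0"
proof -
  interpret prob_space circle_measure by (rule circle_prob)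
  show ?thesis
proof (rule density_zero[OF h])
  define G where "G = range (\<lambda>(a, b). box a b :: real set)"
  have sG: "sets circle_measure = sigma_sets UNIV G"
    unfolding G_def sets_circle by (subst borel_eq_box) (simp add: sets_measure_of)
  have IG: "Int_stable G"
  proof (rule Int_stableI)
    fix x y assume "x \<in> G" "y \<in> G"
    then obtain a b c d where "x = {a<..<b}" "y = {c<..<d}" unfolding G_def by auto
    then have "x \<inter> y = box (max a c) (min b d)" by auto
    moreover have "box (max a c) (min b d) = (\<lambda>(a, b). box a b) (max a c, min b d)" by simp
    ultimately show "x \<inter> y \<in> G" unfolding G_def by (metis rangeI)
  qed
  have ih: "(\<integral>t. h t \<partial>circle_measure) = 0" using H[of 0] by simp
  fix A assume A: "A \<in> sets circle_measure"
  then have AS: "A \<in> sigma_sets UNIV G" using sG by simp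
  have GP: "G \<subseteq> Pow UNIV" by simp
  from IG GP AS show "set_lebesgue_integral circle_measure A h = 0"
  proof (induction rule: sigma_sets_induct_disjoint)
    case (basic A)
    then obtain a b where "A = {a<..<b}" unfolding G_def by auto
    then show ?case unfolding set_lebesgue_integral_def
      using box_integral_zero[OF h H, of a b] by (simp add: scaleR_conv_of_real mult.commute)
  next
    case empty then show ?case by (simp add: set_lebesgue_integral_def)
  next
    case (compl A)
    then have Am: "A \<in> sets circle_measure" using sG by simp
    have "set_lebesgue_integral circle_measure (UNIV - A) h =
        (\<integral>t. h t - indicator A t *\<^sub>R h t \<partial>circle_measure)"
      unfolding set_lebesgue_integral_def
      by (rule Bochner_Integration.integral_cong) (auto simp: indicator_def)
    also have "\<dots> = (\<integral>t. h t \<partial>circle_measure) - set_lebesgue_integral circle_measure A h"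
      unfolding set_lebesgue_integral_def
      by (rule Bochner_Integration.integral_diff[OF h integrable_mult_indicator[OF Am h]])
    finally show ?case using compl ih by simp
  next
    case (union A)
    then have Am: "A i \<in> sets circle_measure" for i using sG by auto
    have "set_lebesgue_integral circle_measure (\<Union>i. A i) h = (\<Sum>i. set_lebesgue_integral circle_measure (A i) h)"
    proof (rule lebesgue_integral_countable_add[OF Am])
      show "A i \<inter> A j = {}" if "i \<noteq> j" for i j using union(1) that by (auto simp: disjoint_family_on_def)
      show "set_integrable circle_measure (\<Union>i. A i) h"
        unfolding set_integrable_def using Am by (intro integrable_mult_indicator h) auto
    qed
    then show ?case using union by simp
  qed
qed
qed

lemma pps: "pair_prob_space (torus n) circle_measure"
proof -
  interpret T: prob_space "torus n" by (rule torus_prob)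
  interpret C: prob_space circle_measure by (rule circle_prob)
  show ?thesis by unfold_locales
qed

lemma psf2: "pair_sigma_finite (torus n) circle_measure"
  using pps by (simp add: pair_prob_space_def)

lemma tcons_restrict: "(\<lambda>\<omega>::(nat\<Rightarrow>real)\<times>real. tcons (Suc n) (snd \<omega>) (fst \<omega>)) =
   (\<lambda>\<omega>. \<lambda>i\<in>{..<Suc n}. if i = 0 then snd \<omega> else fst \<omega> (i - 1))"
  by (auto simp: tcons_def fun_eq_iff)

lemma meas_Phi:
  "(\<lambda>\<omega>. tcons (Suc n) (snd \<omega>) (fst \<omega>)) \<in> measurable (torus n \<Otimes>\<^sub>M circle_measure) (torus (Suc n))"
  unfolding tcons_restrict torus_def
proof (rule measurable_restrict)
  fix i assume i: "i \<in> {..<Suc n}"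
  show "(\<lambda>\<omega>. if i = 0 then snd \<omega> else fst \<omega> (i - 1)) \<in> measurable (PiM {..<n} (\<lambda>_. circle_measure) \<Otimes>\<^sub>M circle_measure) circle_measure"
  proof (cases "i = 0")
    case True then show ?thesis by simp
  next
    case False
    then have "i - 1 \<in> {..<n}" using i by auto
    then have "(\<lambda>x. x (i - 1)) \<in> measurable (PiM {..<n} (\<lambda>_. circle_measure)) circle_measure"
      by (rule measurable_component_singleton)
    then show ?thesis using False by simp
  qed
qed

lemma meas_Phi':
  "(\<lambda>(s, t). tcons (Suc n) t s) \<in> measurable (torus n \<Otimes>\<^sub>M circle_measure) (torus (Suc n))"
proof -
  have "(\<lambda>(s, t). tcons (Suc n) t s) = (\<lambda>\<omega>. tcons (Suc n) (snd \<omega>) (fst \<omega>))" by auto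
  then show ?thesis using meas_Phi by simp
qed

lemma prod_decomp:
  "distr (torus n \<Otimes>\<^sub>M circle_measure) (torus (Suc n)) (\<lambda>(s, t). tcons (Suc n) t s) = torus (Suc n)"
  unfolding torus_def[of "Suc n"]
proof (rule product_sigma_finite.PiM_eqI[OF circle_psf])
  interpret C: prob_space circle_measure by (rule circle_prob)
  show "finite {..<Suc n}" by simp
  show "sets (distr (torus n \<Otimes>\<^sub>M circle_measure) (PiM {..<Suc n} (\<lambda>_. circle_measure)) (\<lambda>(s, t). tcons (Suc n) t s)) =
     sets (PiM {..<Suc n} (\<lambda>_. circle_measure))" by simp
  fix A assume A: "\<And>i. i \<in> {..<Suc n} \<Longrightarrow> A i \<in> sets circle_measure"
  have Am: "PiE {..<Suc n} A \<in> sets (PiM {..<Suc n} (\<lambda>_. circle_measure))"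
    using A by (intro sets_PiM_I_finite) auto
  have pre: "(\<lambda>(s, t). tcons (Suc n) t s) -` PiE {..<Suc n} A \<inter> space (torus n \<Otimes>\<^sub>M circle_measure)
      = PiE {..<n} (\<lambda>i. A (Suc i)) \<times> A 0"
  proof (intro set_eqI iffI)
    fix x assume x: "x \<in> (\<lambda>(s, t). tcons (Suc n) t s) -` PiE {..<Suc n} A \<inter> space (torus n \<Otimes>\<^sub>M circle_measure)"
    obtain s t where xst: "x = (s, t)" by (cases x)
    have s: "s \<in> PiE {..<n} (\<lambda>_. UNIV)" using x xst by (simp add: space_pair_measure space_torus)
    have "tcons (Suc n) t s \<in> PiE {..<Suc n} A" using x xst by simp
    then have "\<forall>i<Suc n. tcons (Suc n) t s i \<in> A i" by (auto simp: PiE_iff)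
    then have "t \<in> A 0" "\<forall>i<n. s i \<in> A (Suc i)" by (auto simp: tcons_def)
    then show "x \<in> PiE {..<n} (\<lambda>i. A (Suc i)) \<times> A 0" using s xst by (auto simp: PiE_iff)
  next
    fix x assume x: "x \<in> PiE {..<n} (\<lambda>i. A (Suc i)) \<times> A 0"
    obtain s t where xst: "x = (s, t)" by (cases x)
    have "tcons (Suc n) t s \<in> PiE {..<Suc n} A"
    proof (unfold PiE_iff, intro conjI ballI)
      fix i assume i: "i \<in> {..<Suc n}"
      show "tcons (Suc n) t s i \<in> A i"
      proof (cases i)
        case 0 then show ?thesis using x xst by (simp add: tcons_def)
      next
        case (Suc j) then show ?thesis using x xst i by (auto simp: tcons_def PiE_iff)
      qed
    next
      show "tcons (Suc n) t s \<in> extensional {..<Suc n}" by (simp add: tcons_def extensional_def)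
    qed
    moreover have "x \<in> space (torus n \<Otimes>\<^sub>M circle_measure)"
      using x xst by (auto simp: space_pair_measure space_torus PiE_iff)
    ultimately show "x \<in> (\<lambda>(s, t). tcons (Suc n) t s) -` PiE {..<Suc n} A \<inter> space (torus n \<Otimes>\<^sub>M circle_measure)"
      using xst by simp
  qed
  have "emeasure (distr (torus n \<Otimes>\<^sub>M circle_measure) (PiM {..<Suc n} (\<lambda>_. circle_measure)) (\<lambda>(s, t). tcons (Suc n) t s)) (PiE {..<Suc n} A)
     = emeasure (torus n \<Otimes>\<^sub>M circle_measure) (PiE {..<n} (\<lambda>i. A (Suc i)) \<times> A 0)"
    by (subst emeasure_distr[OF meas_Phi'[of n, unfolded torus_def[of "Suc n"]] Am]) (simp only: pre)
  also have "\<dots> = emeasure (torus n) (PiE {..<n} (\<lambda>i. A (Suc i))) * emeasure circle_measure (A 0)"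
  proof (rule C.emeasure_pair_measure_Times)
    show "PiE {..<n} (\<lambda>i. A (Suc i)) \<in> sets (torus n)"
      unfolding torus_def by (rule sets_PiM_I_finite) (use A in auto)
    show "A 0 \<in> sets circle_measure" using A by auto
  qed
  also have "emeasure (torus n) (PiE {..<n} (\<lambda>i. A (Suc i))) = (\<Prod>i<n. emeasure circle_measure (A (Suc i)))"
    unfolding torus_def using A by (subst product_sigma_finite.emeasure_PiM[OF circle_psf]) auto
  finally show "emeasure (distr (torus n \<Otimes>\<^sub>M circle_measure) (PiM {..<Suc n} (\<lambda>_. circle_measure)) (\<lambda>(s, t). tcons (Suc n) t s)) (PiE {..<Suc n} A)
     = (\<Prod>i<Suc n. emeasure circle_measure (A i))"
    using prod.lessThan_Suc_shift[of "\<lambda>i. emeasure circle_measure (A i)" n] by (simp del: prod.lessThan_Suc add: mult.commute)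
qed

lemma decomp_integrable:
  fixes F :: "_ \<Rightarrow> 'b::{banach, second_countable_topology}"
  assumes F: "F \<in> borel_measurable (torus (Suc n))"
  shows "integrable (torus (Suc n)) F \<longleftrightarrow> integrable (torus n \<Otimes>\<^sub>M circle_measure) (\<lambda>(s, t). F (tcons (Suc n) t s))"
proof -
  have "integrable (torus (Suc n)) F = integrable (distr (torus n \<Otimes>\<^sub>M circle_measure) (torus (Suc n)) (\<lambda>(s, t). tcons (Suc n) t s)) F"
    by (simp add: prod_decomp)
  also have "\<dots> = integrable (torus n \<Otimes>\<^sub>M circle_measure) (\<lambda>x. F ((\<lambda>(s, t). tcons (Suc n) t s) x))"
    by (rule integrable_distr_eq[OF meas_Phi' F])
  finally show ?thesis by (simp add: case_prod_beta')
qed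

lemma decomp_integral_prod:
  fixes F :: "_ \<Rightarrow> 'b::{banach, second_countable_topology}"
  assumes F: "F \<in> borel_measurable (torus (Suc n))"
  shows "integral\<^sup>L (torus (Suc n)) F = integral\<^sup>L (torus n \<Otimes>\<^sub>M circle_measure) (\<lambda>(s, t). F (tcons (Suc n) t s))"
proof -
  have "integral\<^sup>L (torus (Suc n)) F = integral\<^sup>L (distr (torus n \<Otimes>\<^sub>M circle_measure) (torus (Suc n)) (\<lambda>(s, t). tcons (Suc n) t s)) F"
    by (simp add: prod_decomp)
  also have "\<dots> = integral\<^sup>L (torus n \<Otimes>\<^sub>M circle_measure) (\<lambda>x. F ((\<lambda>(s, t). tcons (Suc n) t s) x))"
    by (rule integral_distr[OF meas_Phi' F])
  finally show ?thesis by (simp add: case_prod_beta')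
qed

lemma decomp_integral:
  fixes F :: "_ \<Rightarrow> 'b::{banach, second_countable_topology}"
  assumes F: "integrable (torus (Suc n)) F"
  shows "integral\<^sup>L (torus (Suc n)) F = (\<integral>s. (\<integral>t. F (tcons (Suc n) t s) \<partial>circle_measure) \<partial>torus n)"
proof -
  interpret pair_sigma_finite "torus n" circle_measure by (rule psf2)
  have Fm: "F \<in> borel_measurable (torus (Suc n))" using F by simp
  have I: "integrable (torus n \<Otimes>\<^sub>M circle_measure) (\<lambda>(s, t). F (tcons (Suc n) t s))"
    using F decomp_integrable[OF Fm] by simp
  show ?thesis unfolding decomp_integral_prod[OF Fm] using integral_fst'[OF I] by simp
qed

lemma decomp_AE_integrable:
  fixes F :: "_ \<Rightarrow> 'b::{banach, second_countable_topology}"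
  assumes F: "integrable (torus (Suc n)) F"
  shows "AE s in torus n. integrable circle_measure (\<lambda>t. F (tcons (Suc n) t s))"
proof -
  interpret pair_sigma_finite "torus n" circle_measure by (rule psf2)
  have Fm: "F \<in> borel_measurable (torus (Suc n))" using F by simp
  have I: "integrable (torus n \<Otimes>\<^sub>M circle_measure) (\<lambda>(s, t). F (tcons (Suc n) t s))"
    using F decomp_integrable[OF Fm] by simp
  show ?thesis using AE_integrable_fst'[OF I] by simp
qed

lemma decomp_integrable_inner:
  fixes F :: "_ \<Rightarrow> 'b::{banach, second_countable_topology}"
  assumes F: "integrable (torus (Suc n)) F"
  shows "integrable (torus n) (\<lambda>s. \<integral>t. F (tcons (Suc n) t s) \<partial>circle_measure)"
proof -
  interpret pair_sigma_finite "torus n" circle_measure by (rule psf2)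
  have Fm: "F \<in> borel_measurable (torus (Suc n))" using F by simp
  have I: "integrable (torus n \<Otimes>\<^sub>M circle_measure) (\<lambda>(s, t). F (tcons (Suc n) t s))"
    using F decomp_integrable[OF Fm] by simp
  show ?thesis using integrable_fst'[OF I] by simp
qed

lemma decomp_meas_inner:
  fixes F :: "_ \<Rightarrow> 'b::{banach, second_countable_topology}"
  assumes F: "F \<in> borel_measurable (torus (Suc n))"
  shows "(\<lambda>s. \<integral>t. F (tcons (Suc n) t s) \<partial>circle_measure) \<in> borel_measurable (torus n)"
proof -
  interpret C: prob_space circle_measure by (rule circle_prob)
  have "(\<lambda>x. F ((\<lambda>(s, t). tcons (Suc n) t s) x)) \<in> borel_measurable (torus n \<Otimes>\<^sub>M circle_measure)"
    using measurable_comp[OF meas_Phi' F] by (simp add: o_def)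
  then have "case_prod (\<lambda>s t. F (tcons (Suc n) t s)) \<in> borel_measurable (torus n \<Otimes>\<^sub>M circle_measure)"
    by (simp add: case_prod_beta')
  then show ?thesis by (rule C.borel_measurable_lebesgue_integral)
qed

lemma decomp_meas_slice:
  assumes F: "F \<in> measurable (torus (Suc n)) M" and s: "s \<in> space (torus n)"
  shows "(\<lambda>t. F (tcons (Suc n) t s)) \<in> measurable circle_measure M"
proof -
  have "(\<lambda>x. F ((\<lambda>(s, t). tcons (Suc n) t s) x)) \<in> measurable (torus n \<Otimes>\<^sub>M circle_measure) M"
    using measurable_comp[OF meas_Phi' F] by (simp add: o_def)
  from measurable_Pair2[OF this s] show ?thesis by simp
qed

lemma decomp_AE:
  assumes P: "{x \<in> space (torus (Suc n)). P x} \<in> sets (torus (Suc n))"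
    and ae: "AE s in torus n. AE t in circle_measure. P (tcons (Suc n) t s)"
  shows "AE x in torus (Suc n). P x"
proof -
  interpret pair_sigma_finite "torus n" circle_measure by (rule psf2)
  have "AE x in torus n \<Otimes>\<^sub>M circle_measure. P ((\<lambda>(s, t). tcons (Suc n) t s) x)"
  proof (rule AE_pair_measure)
    have "{x \<in> space (torus n \<Otimes>\<^sub>M circle_measure). P ((\<lambda>(s, t). tcons (Suc n) t s) x)} =
        (\<lambda>(s, t). tcons (Suc n) t s) -` {x \<in> space (torus (Suc n)). P x} \<inter> space (torus n \<Otimes>\<^sub>M circle_measure)"
      using measurable_space[OF meas_Phi'[of n]] by auto
    also have "\<dots> \<in> sets (torus n \<Otimes>\<^sub>M circle_measure)"
      by (rule measurable_sets[OF meas_Phi' P])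
    finally show "{x \<in> space (torus n \<Otimes>\<^sub>M circle_measure). P ((\<lambda>(s, t). tcons (Suc n) t s) x)} \<in> sets (torus n \<Otimes>\<^sub>M circle_measure)" .
    show "AE s in torus n. AE t in circle_measure. P ((\<lambda>(s, t). tcons (Suc n) t s) (s, t))"
      using ae by simp
  qed
  then have "AE x in distr (torus n \<Otimes>\<^sub>M circle_measure) (torus (Suc n)) (\<lambda>(s, t). tcons (Suc n) t s). P x"
    by (subst AE_distr_iff[OF meas_Phi' P])
  then show ?thesis unfolding prod_decomp .
qed

lemma meas_comp_torus:
  assumes "j < N" shows "(\<lambda>x. x j) \<in> borel_measurable (torus N)"
proof -
  have "(\<lambda>x. x j) \<in> measurable (torus N) circle_measure"
    unfolding torus_def using assms by (intro measurable_component_singleton) auto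
  then show ?thesis using measurable_cong_sets[OF refl sets_circle] by blast
qed

lemma meas_lin_torus:
  "(\<lambda>x. \<Sum>j<N. of_int (k j) * x j :: real) \<in> borel_measurable (torus N)"
  by (intro borel_measurable_sum borel_measurable_times borel_measurable_const meas_comp_torus) auto

lemma meas_char[measurable]:
  "(\<lambda>x. exp (- \<i> * of_real (\<Sum>j<N. of_int (k j) * x j))) \<in> borel_measurable (torus N)"
  using meas_lin_torus[of k N] by measurable

lemma sum_tcons:
  "(\<Sum>j<Suc n. of_int (k j) * tcons (Suc n) t s j) = of_int (k 0) * t + (\<Sum>j<n. of_int (k (Suc j)) * s j)"
  by (simp only: sum.lessThan_Suc_shift) (simp add: tcons_def)

lemma exp_split: "exp (- \<i> * complex_of_real (a + b)) = exp (- \<i> * of_real a) * exp (- \<i> * of_real b)"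
  by (simp add: exp_add[symmetric] distrib_left)

lemma fourier_decomp:
  assumes g: "integrable (torus (Suc n)) g"
  shows "fourier_coeff (Suc n) k g = fourier_coeff n (\<lambda>j. k (Suc j))
      (\<lambda>s. \<integral>t. g (tcons (Suc n) t s) * exp (- \<i> * of_real (of_int (k 0) * t)) \<partial>circle_measure)"
proof -
  have gm[measurable]: "g \<in> borel_measurable (torus (Suc n))" using g by simp
  have int: "integrable (torus (Suc n)) (\<lambda>x. g x * exp (- \<i> * of_real (\<Sum>j<Suc n. of_int (k j) * x j)))"
    by (rule integrable_mult_bdd[OF g meas_char, where B=1]) (simp add: norm_mult)
  have "fourier_coeff (Suc n) k g = (\<integral>s. (\<integral>t. g (tcons (Suc n) t s) *
       exp (- \<i> * of_real (\<Sum>j<Suc n. of_int (k j) * tcons (Suc n) t s j)) \<partial>circle_measure) \<partial>torus n)"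
    unfolding fourier_coeff_def by (rule decomp_integral[OF int])
  also have "\<dots> = (\<integral>s. (\<integral>t. g (tcons (Suc n) t s) * exp (- \<i> * of_real (of_int (k 0) * t)) \<partial>circle_measure) *
       exp (- \<i> * of_real (\<Sum>j<n. of_int (k (Suc j)) * s j)) \<partial>torus n)"
  proof (rule Bochner_Integration.integral_cong[OF refl])
    fix s
    have "(\<integral>t. g (tcons (Suc n) t s) * exp (- \<i> * of_real (\<Sum>j<Suc n. of_int (k j) * tcons (Suc n) t s j)) \<partial>circle_measure)
      = (\<integral>t. g (tcons (Suc n) t s) * exp (- \<i> * of_real (of_int (k 0) * t)) *
       exp (- \<i> * of_real (\<Sum>j<n. of_int (k (Suc j)) * s j)) \<partial>circle_measure)"
      by (rule Bochner_Integration.integral_cong[OF refl])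
        (simp only: sum_tcons exp_split mult.assoc)
    also have "\<dots> = (\<integral>t. g (tcons (Suc n) t s) * exp (- \<i> * of_real (of_int (k 0) * t)) \<partial>circle_measure) *
       exp (- \<i> * of_real (\<Sum>j<n. of_int (k (Suc j)) * s j))"
      by (rule integral_mult_left_zero)
    finally show "(\<integral>t. g (tcons (Suc n) t s) * exp (- \<i> * of_real (\<Sum>j<Suc n. of_int (k j) * tcons (Suc n) t s j)) \<partial>circle_measure)
      = (\<integral>t. g (tcons (Suc n) t s) * exp (- \<i> * of_real (of_int (k 0) * t)) \<partial>circle_measure) *
       exp (- \<i> * of_real (\<Sum>j<n. of_int (k (Suc j)) * s j))" .
  qed
  also have "\<dots> = fourier_coeff n (\<lambda>j. k (Suc j))
      (\<lambda>s. \<integral>t. g (tcons (Suc n) t s) * exp (- \<i> * of_real (of_int (k 0) * t)) \<partial>circle_measure)"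
    unfolding fourier_coeff_def ..
  finally show ?thesis .
qed

lemma torus0: "torus 0 = count_space {\<lambda>_. undefined}"
  unfolding torus_def by (simp add: PiM_empty)

lemma inner_integrable:
  assumes g: "integrable (torus (Suc n)) g"
  shows "integrable (torus n) (\<lambda>s. \<integral>t. g (tcons (Suc n) t s) * exp (- \<i> * of_real (of_int m * t)) \<partial>circle_measure)"
proof -
  have m0: "(\<lambda>x. x 0) \<in> borel_measurable (torus (Suc n))" by (rule meas_comp_torus) simp
  have "integrable (torus (Suc n)) (\<lambda>x. g x * exp (- \<i> * of_real (of_int m * x 0)))"
  proof (rule integrable_mult_bdd[OF g, where B=1])
    show "(\<lambda>x. exp (- \<i> * complex_of_real (real_of_int m * x 0))) \<in> borel_measurable (torus (Suc n))"
      using m0 by measurable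
  qed (simp add: norm_mult)
  from decomp_integrable_inner[OF this] show ?thesis by (simp add: tcons_def)
qed

lemma uniqueN:
  assumes "integrable (torus n) g" "\<And>k. fourier_coeff n k g = 0"
  shows "AE x in torus n. g x = 0"
  using assms
proof (induction n arbitrary: g)
  case 0
  have "fourier_coeff 0 k g = g (\<lambda>_. undefined)" for k
    unfolding fourier_coeff_def torus0 by (simp add: lebesgue_integral_count_space_finite)
  then have "g (\<lambda>_. undefined) = 0" using 0 by simp
  then show ?case unfolding torus0 AE_count_space by simp
next
  case (Suc n)
  note g = Suc.prems(1)
  have gm[measurable]: "g \<in> borel_measurable (torus (Suc n))" using g by simp
  define \<gamma> where "\<gamma> m s = (\<integral>t. g (tcons (Suc n) t s) * exp (- \<i> * of_real (of_int m * t)) \<partial>circle_measure)" for m :: int and s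
  have "AE s in torus n. \<gamma> m s = 0" for m
  proof (rule Suc.IH)
    show "integrable (torus n) (\<gamma> m)" unfolding \<gamma>_def by (rule inner_integrable[OF g])
    fix k'
    define K where "K = (\<lambda>j::nat. if j = 0 then m else k' (j - 1))"
    have "fourier_coeff (Suc n) K g = fourier_coeff n (\<lambda>j. K (Suc j)) (\<gamma> (K 0))"
      unfolding \<gamma>_def by (rule fourier_decomp[OF g])
    also have "(\<lambda>j. K (Suc j)) = k'" unfolding K_def by auto
    also have "K 0 = m" unfolding K_def by simp
    finally show "fourier_coeff n k' (\<gamma> m) = 0" using Suc.prems(2)[of K] by simp
  qed
  then have "AE s in torus n. \<forall>m. \<gamma> m s = 0" by (simp add: AE_all_countable)
  then have "AE s in torus n. AE t in circle_measure. g (tcons (Suc n) t s) = 0"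
    using decomp_AE_integrable[OF g]
  proof eventually_elim
    case (elim s)
    show ?case
    proof (rule unique1)
      show "integrable circle_measure (\<lambda>t. g (tcons (Suc n) t s))" by fact
      show "(\<integral>t. g (tcons (Suc n) t s) * exp (- \<i> * of_real (of_int m * t)) \<partial>circle_measure) = 0" for m
        using elim(1) unfolding \<gamma>_def by simp
    qed
  qed
  then show ?case
    by (intro decomp_AE) measurable
qed

lemma Lp_integrable:
  assumes "finite_measure M" "p \<ge> 1" "Lp_space M p f"
  shows "integrable M f"
proof -
  interpret finite_measure M by fact
  have fm: "f \<in> borel_measurable M" and fi: "integrable M (\<lambda>x. norm (f x) powr p)"
    using assms(3) unfolding Lp_space_def by auto
  show ?thesis
  proof (rule Bochner_Integration.integrable_bound[where f="\<lambda>x. 1 + norm (f x) powr p"])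
    show "integrable M (\<lambda>x. 1 + norm (f x) powr p)" using fi by simp
    show "f \<in> borel_measurable M" by fact
    show "AE x in M. norm (f x) \<le> norm (1 + norm (f x) powr p)"
    proof (intro AE_I2)
      fix x
      have "norm (f x) \<le> 1 + norm (f x) powr p"
      proof (cases "norm (f x) \<le> 1")
        case True
        have "0 \<le> norm (f x) powr p" by simp
        then show ?thesis using True by linarith
      next
        case False
        then have "norm (f x) powr 1 \<le> norm (f x) powr p" using assms(2) by (intro powr_mono) auto
        then show ?thesis using False by simp
      qed
      then show "norm (f x) \<le> norm (1 + norm (f x) powr p)" by simp
    qed
  qed
qed

lemma powr_tangent:
  fixes a y p :: real
  assumes a: "a > 0" and y: "y \<ge> 0" and p: "p \<ge> 1"
  shows "y powr p \<ge> a powr p + p * a powr (p - 1) * (y - a)"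
proof (cases "y = 0")
  case True
  have "a powr (p - 1) * a = a powr p" using a by (simp add: powr_diff)
  then have "a powr p + p * a powr (p - 1) * (y - a) = (1 - p) * a powr p" using True by (simp add: algebra_simps)
  also have "\<dots> \<le> 0" using p by (simp add: mult_nonpos_nonneg)
  finally show ?thesis using True by simp
next
  case False
  then have y0: "y \<in> {0<..}" using y by simp
  have "y powr p - a powr p \<ge> p * a powr (p - 1) * (y - a)"
  proof (rule convex_on_imp_above_tangent[OF powr_convex[OF p]])
    show "connected {0::real<..}" by simp
    show "a \<in> interior {0<..}" using a by (simp add: interior_open)
    show "y \<in> {0<..}" by fact
    show "((\<lambda>x. x powr p) has_real_derivative p * a powr (p - 1)) (at a within {0<..})"
      using has_real_derivative_powr[OF a] by (rule has_field_derivative_at_within)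
  qed
  then show ?thesis by simp
qed

lemma jensen_powr:
  fixes u :: "'a \<Rightarrow> complex"
  assumes M: "prob_space M" and u: "integrable M u" and up: "integrable M (\<lambda>x. norm (u x) powr p)"
    and p: "p \<ge> 1"
  shows "norm (integral\<^sup>L M u) powr p \<le> (\<integral>x. norm (u x) powr p \<partial>M)"
proof -
  interpret prob_space M by fact
  define a where "a = (\<integral>x. norm (u x) \<partial>M)"
  have a0: "a \<ge> 0" unfolding a_def by simp
  have na: "norm (integral\<^sup>L M u) \<le> a" unfolding a_def by (rule integral_norm_bound)
  have rhs0: "0 \<le> (\<integral>x. norm (u x) powr p \<partial>M)" by simp
  show ?thesis
  proof (cases "a = 0")
    case True
    then have "norm (integral\<^sup>L M u) = 0" using na by simp
    then show ?thesis using rhs0 by simp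
  next
    case False
    then have apos: "a > 0" using a0 by simp
    have "norm (integral\<^sup>L M u) powr p \<le> a powr p"
      using na p by (intro powr_mono2) auto
    also have "a powr p = (\<integral>x. a powr p + p * a powr (p - 1) * (norm (u x) - a) \<partial>M)"
    proof -
      have "(\<integral>x. a powr p + p * a powr (p - 1) * (norm (u x) - a) \<partial>M) =
          a powr p + p * a powr (p - 1) * ((\<integral>x. norm (u x) \<partial>M) - a)"
        using u by (simp add: prob_space)
      then show ?thesis unfolding a_def by simp
    qed
    also have "\<dots> \<le> (\<integral>x. norm (u x) powr p \<partial>M)"
      by (intro integral_mono up powr_tangent[OF apos] p norm_ge_zero)
        (use u in simp)
    finally show ?thesis .
  qed
qed

lemma torus1_distr: "distr (torus 1) circle_measure (\<lambda>x. x 0) = circle_measure"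
  unfolding torus_def by (rule distr_PiM_component) (auto intro: circle_prob)

lemma proj0_meas: "(\<lambda>x. x 0) \<in> measurable (torus 1) circle_measure"
  unfolding torus_def by (rule measurable_component_singleton) simp

lemma torus1_integrable:
  fixes H :: "real \<Rightarrow> 'b::{banach, second_countable_topology}"
  assumes "H \<in> borel_measurable circle_measure"
  shows "integrable (torus 1) (\<lambda>x. H (x 0)) \<longleftrightarrow> integrable circle_measure H"
  using integrable_distr_eq[OF proj0_meas assms] torus1_distr by simp

lemma torus1_integral:
  fixes H :: "real \<Rightarrow> 'b::{banach, second_countable_topology}"
  assumes "H \<in> borel_measurable circle_measure"
  shows "(\<integral>x. H (x 0) \<partial>torus 1) = integral\<^sup>L circle_measure H"
  using integral_distr[OF proj0_meas assms] torus1_distr by simp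

lemma torus1_meas:
  assumes "H \<in> borel_measurable circle_measure"
  shows "(\<lambda>x. H (x 0)) \<in> borel_measurable (torus 1)"
  using measurable_comp[OF proj0_meas assms] by (simp add: o_def)

lemma main_Suc:
  fixes n :: nat and p :: real and f :: "(nat \<Rightarrow> real) \<Rightarrow> complex"
  assumes p: "p \<ge> 1" and Lp: "Lp_space (torus (Suc n)) p f"
  shows "Hp (Suc n) p f \<longleftrightarrow>
           ((AE s in torus n. Hp 1 p (slice (Suc n) f s)) \<and> Hp n p (fhat (Suc n) f))"
proof -
  have fm[measurable]: "f \<in> borel_measurable (torus (Suc n))"
    and fp: "integrable (torus (Suc n)) (\<lambda>x. norm (f x) powr p)"
    using Lp unfolding Lp_space_def by auto
  have fin: "finite_measure (torus (Suc n))" using torus_prob prob_space_def by blast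
  have fint: "integrable (torus (Suc n)) f" by (rule Lp_integrable[OF fin p Lp])
  define \<gamma> where "\<gamma> m s = (\<integral>t. f (tcons (Suc n) t s) * exp (- \<i> * of_real (of_int m * t)) \<partial>circle_measure)"
    for m :: int and s
  have \<gamma>int: "integrable (torus n) (\<gamma> m)" for m
    unfolding \<gamma>_def by (rule inner_integrable[OF fint])
  have fhat_eq: "fhat (Suc n) f = \<gamma> 0"
    by (simp add: fhat_def \<gamma>_def fun_eq_iff)
  have coeff\<gamma>: "fourier_coeff n k' (\<gamma> m) = fourier_coeff (Suc n) (\<lambda>j. if j = 0 then m else k' (j - 1)) f"
    for k' m
  proof -
    define K where "K = (\<lambda>j::nat. if j = 0 then m else k' (j - 1))"
    have "fourier_coeff (Suc n) K f = fourier_coeff n (\<lambda>j. K (Suc j)) (\<gamma> (K 0))"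
      unfolding \<gamma>_def by (rule fourier_decomp[OF fint])
    also have "(\<lambda>j. K (Suc j)) = k'" unfolding K_def by auto
    also have "K 0 = m" unfolding K_def by simp
    finally show ?thesis unfolding K_def by simp
  qed
  have hp_iff: "in_halfplane (Suc n) (\<lambda>j. if j = 0 then m else k' (j - 1)) \<longleftrightarrow> (m > 0 \<or> m = 0 \<and> in_halfplane n k')"
    for m k' by simp
  have slice_meas: "(\<lambda>t. f (tcons (Suc n) t s)) \<in> borel_measurable circle_measure" if "s \<in> space (torus n)" for s
    by (rule decomp_meas_slice[OF fm that])
  have slice_coeff: "fourier_coeff 1 k (slice (Suc n) f s) = \<gamma> (k 0) s" if s: "s \<in> space (torus n)" for k s
  proof -
    have Hm: "(\<lambda>t. f (tcons (Suc n) t s) * exp (- \<i> * of_real (of_int (k 0) * t))) \<in> borel_measurable circle_measure"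
      using slice_meas[OF s] by measurable
    have "fourier_coeff 1 k (slice (Suc n) f s) =
        (\<integral>x. (\<lambda>t. f (tcons (Suc n) t s) * exp (- \<i> * of_real (of_int (k 0) * t))) (x 0) \<partial>torus 1)"
      unfolding fourier_coeff_def slice_def by simp
    also have "\<dots> = \<gamma> (k 0) s" unfolding torus1_integral[OF Hm] \<gamma>_def ..
    finally show ?thesis .
  qed
  have slice_int: "integrable (torus 1) (slice (Suc n) f s)"
    if "s \<in> space (torus n)" "integrable circle_measure (\<lambda>t. f (tcons (Suc n) t s))" for s
    using torus1_integrable[OF slice_meas[OF that(1)]] that(2) unfolding slice_def by simp
  have slice_Lp: "Lp_space (torus 1) p (slice (Suc n) f s)"
    if "s \<in> space (torus n)" "integrable circle_measure (\<lambda>t. norm (f (tcons (Suc n) t s)) powr p)" for s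
  proof -
    have m1: "(\<lambda>t. norm (f (tcons (Suc n) t s)) powr p) \<in> borel_measurable circle_measure"
      using slice_meas[OF that(1)] by measurable
    show ?thesis unfolding Lp_space_def slice_def
      using torus1_meas[OF slice_meas[OF that(1)]] torus1_integrable[OF m1] that(2) by simp
  qed
  have aeI: "AE s in torus n. integrable circle_measure (\<lambda>t. f (tcons (Suc n) t s))"
    by (rule decomp_AE_integrable[OF fint])
  have aeP: "AE s in torus n. integrable circle_measure (\<lambda>t. norm (f (tcons (Suc n) t s)) powr p)"
    using decomp_AE_integrable[OF fp] by simp
  show ?thesis
  proof
    assume H: "Hp (Suc n) p f"
    then have hz: "\<And>k. \<not> in_halfplane (Suc n) k \<Longrightarrow> fourier_coeff (Suc n) k f = 0"
      unfolding Hp_def analytic_class_def by auto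
    have "AE s in torus n. m < 0 \<longrightarrow> \<gamma> m s = 0" for m
    proof (cases "m < 0")
      case True
      have "AE s in torus n. \<gamma> m s = 0"
      proof (rule uniqueN[OF \<gamma>int])
        fix k'
        show "fourier_coeff n k' (\<gamma> m) = 0"
          unfolding coeff\<gamma> using True by (intro hz) (simp only: hp_iff, simp)
      qed
      then show ?thesis by auto
    qed simp
    then have ae0: "AE s in torus n. \<forall>m. m < 0 \<longrightarrow> \<gamma> m s = 0" by (simp add: AE_all_countable)
    have slices: "AE s in torus n. Hp 1 p (slice (Suc n) f s)"
      using ae0 aeI aeP AE_space
    proof eventually_elim
      case (elim s)
      show ?case unfolding Hp_def analytic_class_def
      proof (intro conjI allI impI)
        show "integrable (torus 1) (slice (Suc n) f s)" using slice_int elim by blast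
        show "Lp_space (torus 1) p (slice (Suc n) f s)" using slice_Lp elim by blast
        fix k assume "\<not> in_halfplane 1 k"
        then have "k 0 < 0" by (simp add: numeral_eq_Suc)
        then show "fourier_coeff 1 k (slice (Suc n) f s) = 0"
          using slice_coeff[OF elim(4)] elim(1) by simp
      qed
    qed
    have fh: "Hp n p (fhat (Suc n) f)"
      unfolding fhat_eq Hp_def analytic_class_def
    proof (intro conjI allI impI)
      show "integrable (torus n) (\<gamma> 0)" by (rule \<gamma>int)
      fix k' assume "\<not> in_halfplane n k'"
      then show "fourier_coeff n k' (\<gamma> 0) = 0"
        unfolding coeff\<gamma> by (intro hz) (simp only: hp_iff, simp)
    next
      have \<gamma>m[measurable]: "\<gamma> 0 \<in> borel_measurable (torus n)" using \<gamma>int[of 0] by simp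
      have \<gamma>0: "\<gamma> 0 s = (\<integral>t. f (tcons (Suc n) t s) \<partial>circle_measure)" for s
        unfolding \<gamma>_def by simp
      show "Lp_space (torus n) p (\<gamma> 0)" unfolding Lp_space_def
      proof (intro conjI)
        show "\<gamma> 0 \<in> borel_measurable (torus n)" by measurable
        show "integrable (torus n) (\<lambda>s. norm (\<gamma> 0 s) powr p)"
        proof (rule Bochner_Integration.integrable_bound)
          show "integrable (torus n) (\<lambda>s. \<integral>t. norm (f (tcons (Suc n) t s)) powr p \<partial>circle_measure)"
            using decomp_integrable_inner[OF fp] by simp
          show "(\<lambda>s. norm (\<gamma> 0 s) powr p) \<in> borel_measurable (torus n)" by measurable
          show "AE s in torus n. norm (norm (\<gamma> 0 s) powr p) \<le> norm (\<integral>t. norm (f (tcons (Suc n) t s)) powr p \<partial>circle_measure)"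
            using aeI aeP
          proof eventually_elim
            case (elim s)
            have "norm (\<gamma> 0 s) powr p \<le> (\<integral>t. norm (f (tcons (Suc n) t s)) powr p \<partial>circle_measure)"
              unfolding \<gamma>0 by (rule jensen_powr[OF circle_prob elim p])
            moreover have "0 \<le> (\<integral>t. norm (f (tcons (Suc n) t s)) powr p \<partial>circle_measure)" by simp
            ultimately show ?case by simp
          qed
        qed
      qed
    qed
    show "(AE s in torus n. Hp 1 p (slice (Suc n) f s)) \<and> Hp n p (fhat (Suc n) f)"
      using slices fh by simp
  next
    assume R: "(AE s in torus n. Hp 1 p (slice (Suc n) f s)) \<and> Hp n p (fhat (Suc n) f)"
    show "Hp (Suc n) p f" unfolding Hp_def analytic_class_def
    proof (intro conjI allI impI fint Lp)
      fix k assume nk: "\<not> in_halfplane (Suc n) k"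
      have dec: "fourier_coeff (Suc n) k f = fourier_coeff n (\<lambda>j. k (Suc j)) (\<gamma> (k 0))"
        unfolding \<gamma>_def by (rule fourier_decomp[OF fint])
      show "fourier_coeff (Suc n) k f = 0"
      proof (cases "k 0 < 0")
        case True
        have "AE s in torus n. \<gamma> (k 0) s = 0"
          using conjunct1[OF R] AE_space
        proof eventually_elim
          case (elim s)
          have "\<not> in_halfplane 1 k" using True by (simp add: numeral_eq_Suc)
          then have "fourier_coeff 1 k (slice (Suc n) f s) = 0"
            using elim(1) unfolding Hp_def analytic_class_def by blast
          then show ?case using slice_coeff[OF elim(2)] by simp
        qed
        then have "AE s in torus n. \<gamma> (k 0) s * exp (- \<i> * of_real (\<Sum>j<n. of_int (k (Suc j)) * s j)) = 0"
          by eventually_elim simp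
        then have "fourier_coeff n (\<lambda>j. k (Suc j)) (\<gamma> (k 0)) = 0"
          unfolding fourier_coeff_def by (rule integral_eq_zero_AE)
        then show ?thesis using dec by simp
      next
        case False
        then have k0: "k 0 = 0" and nk': "\<not> in_halfplane n (\<lambda>j. k (Suc j))" using nk by auto
        have "fourier_coeff n (\<lambda>j. k (Suc j)) (fhat (Suc n) f) = 0"
          using R nk' unfolding Hp_def analytic_class_def by blast
        then show ?thesis using dec k0 fhat_eq by simp
      qed
    qed
  qed
qed

theorem proposition2p1:
  fixes N :: nat and p :: real and f :: "(nat \<Rightarrow> real) \<Rightarrow> complex"
  assumes "N \<ge> 2" and "p \<ge> 1" and "Lp_space (torus N) p f"
  shows "Hp N p f \<longleftrightarrow>
           ((AE s in torus (N - 1). Hp 1 p (slice N f s)) \<and> Hp (N - 1) p (fhat N f))"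
proof -
  obtain n where N: "N = Suc n" using assms(1) by (cases N) auto
  have e: "N - 1 = n" using N by simp
  show ?thesis unfolding e unfolding N using main_Suc[OF assms(2) assms(3)[unfolded N]] .
qed

end
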